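(* Let $L\geq 1$ be an integer, $P\geq 0$, and $p_B\in[0,1]$. Let $\beta_1,\ldots,\beta_L$ be i.i.d. with $\mathbb{P}(\beta_l=0)=p_B$, $\mathbb{P}(\beta_l=1)=1-p_B$, and $\theta_1,\ldots,\theta_L$ i.i.d. $\mathrm{Uniform}(0,2\pi)$ independent of the $\beta_l$. Set $\mathbf{h}=[\beta_1e^{j\theta_1},\ldots,\beta_Le^{j\theta_L}]^{\mathsf T}$ and $\alpha=\sum_{l=1}^L\beta_l$. Then $$\sup\Big\{\mathbb{E}\big[\log(1+\mathbf{h}^{\mathsf H}\mathbf{Q}\mathbf{h})\big]\;:\;\mathbf{Q}\in\mathbb{C}^{L\times L}\text{ Hermitian positive semidefinite},\ [\mathbf{Q}]_{l,l}\leq P\ \forall l\Big\}=\mathbb{E}[\log(1+\alpha P)],$$ i.e. the ergodic capacity without channel state information at the transmitters equals the one with knowledge of the blockage state $\boldsymbol{\beta}$ at the transmitters.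
   Context: The supremum is over input covariance matrices that do not depend on the channel state (no transmitter channel state information). $\log$ is the logarithm in a fixed base; $\alpha\sim\mathrm{Binomial}(L,1-p_B)$ is the number of non-blocked transmitters. *)

theory Defs
  imports "HOL-Probability.Probability"
begin

text \<open>The sample space is one pair (beta_l, theta_l) per transmitter l,
  indexed by a finite type 'n with L = CARD('n). beta_l is encoded as a bool
  (True means beta_l = 1, which has probability 1 - pB); theta_l is uniform on [0, 2 pi].\<close>

definition chan_space :: "real \<Rightarrow> ('n::finite \<Rightarrow> bool \<times> real) measure" where
  "chan_space pB = PiM UNIV (\<lambda>_. measure_pmf (bernoulli_pmf (1 - pB))
                                  \<Otimes>\<^sub>M uniform_measure lborel {0..2*pi})"

definition beta :: "('n::finite \<Rightarrow> bool \<times> real) \<Rightarrow> 'n \<Rightarrow> real" where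
  "beta \<omega> l = (if fst (\<omega> l) then 1 else 0)"

definition chan :: "('n::finite \<Rightarrow> bool \<times> real) \<Rightarrow> complex^'n" where
  "chan \<omega> = (\<chi> l. complex_of_real (beta \<omega> l) * cis (snd (\<omega> l)))"

definition num_unblocked :: "('n::finite \<Rightarrow> bool \<times> real) \<Rightarrow> real" where
  "num_unblocked \<omega> = (\<Sum>l\<in>UNIV. beta \<omega> l)"

definition herm_form :: "complex^'n^'n \<Rightarrow> complex^'n \<Rightarrow> complex" where
  "herm_form Q x = (\<Sum>i\<in>UNIV. \<Sum>j\<in>UNIV. cnj (x $ i) * (Q $ i $ j) * x $ j)"

definition hermitian :: "complex^'n^'n \<Rightarrow> bool" where
  "hermitian Q \<longleftrightarrow> (\<forall>i j. Q $ i $ j = cnj (Q $ j $ i))"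

definition herm_psd :: "complex^'n^'n \<Rightarrow> bool" where
  "herm_psd Q \<longleftrightarrow> hermitian Q \<and> (\<forall>x. 0 \<le> Re (herm_form Q x))"

end

theory Submission
  imports Defs
begin


abbreviation unif :: "real measure" where "unif \<equiv> uniform_measure lborel {0..2*pi}"

lemma unif_int:
  fixes f :: "real \<Rightarrow> real" assumes [measurable]: "f \<in> borel_measurable borel"
  shows "(\<integral>\<theta>. f \<theta> \<partial>unif) = (\<integral>\<theta>. indicator {0..2*pi} \<theta> * f \<theta> \<partial>lborel) / (2*pi)"
proof -
  have "unif = density lborel (\<lambda>x. ennreal (indicator {0..2*pi} x / (2*pi)))"
    unfolding uniform_measure_def
  proof (intro density_cong)
    have "1 / ennreal (2*pi) = ennreal (1 / (2*pi))"
      using divide_ennreal[of 1 "2*pi"] by simp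
    then show "AE x in lborel. indicator {0..2*pi} x / emeasure lborel {0..2*pi} = ennreal (indicator {0..2*pi} x / (2*pi))"
      by (intro AE_I2) (simp add: indicator_def)
  qed simp_all
  then have "(\<integral>\<theta>. f \<theta> \<partial>unif) = (\<integral>\<theta>. (indicator {0..2*pi} \<theta> / (2*pi)) * f \<theta> \<partial>lborel)"
    by (simp add: integral_density)
  also have "\<dots> = (\<integral>\<theta>. indicator {0..2*pi} \<theta> * f \<theta> \<partial>lborel) / (2*pi)"
  proof -
    have "(\<lambda>\<theta>. (indicator {0..2*pi} \<theta> / (2*pi)) * f \<theta>) = (\<lambda>\<theta>. indicator {0..2*pi} \<theta> * f \<theta> / (2*pi))"
      by auto
    then show ?thesis by (simp only: integral_divide_zero)
  qed
  finally show ?thesis .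
qed

lemma unif_cos: "(\<integral>\<theta>. cos \<theta> \<partial>unif) = 0"
proof -
  have "(\<integral>\<theta>. indicator {0..2*pi} \<theta> *\<^sub>R cos \<theta> \<partial>lborel) = sin (2*pi) - sin 0"
    by (intro integral_FTC_atLeastAtMost)
       (auto intro!: derivative_eq_intros continuous_intros simp: has_real_derivative_iff_has_vector_derivative[symmetric])
  then show ?thesis by (simp add: unif_int)
qed

lemma unif_sin: "(\<integral>\<theta>. sin \<theta> \<partial>unif) = 0"
proof -
  have "(\<integral>\<theta>. indicator {0..2*pi} \<theta> *\<^sub>R sin \<theta> \<partial>lborel) = (- cos (2*pi)) - (- cos 0)"
    by (intro integral_FTC_atLeastAtMost)
       (auto intro!: derivative_eq_intros continuous_intros simp: has_real_derivative_iff_has_vector_derivative[symmetric])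
  then show ?thesis by (simp add: unif_int)
qed

lemma prob_unif: "prob_space unif"
  by (intro prob_space_uniform_measure) auto



lemma pair_zero:
  fixes G :: "bool \<Rightarrow> real" and \<phi> :: "real \<Rightarrow> real"
  assumes [measurable]: "\<phi> \<in> borel_measurable borel" and bnd: "\<And>t. \<bar>\<phi> t\<bar> \<le> 1"
    and z: "(\<integral>\<theta>. \<phi> \<theta> \<partial>unif) = 0"
  shows "(\<integral>y. G (fst y) * \<phi> (snd y) \<partial>(measure_pmf (bernoulli_pmf q) \<Otimes>\<^sub>M unif)) = 0"
proof -
  interpret U: prob_space unif by (rule prob_unif)
  interpret P: pair_sigma_finite "measure_pmf (bernoulli_pmf q)" unif
    by (simp add: pair_sigma_finite_def prob_space_imp_sigma_finite prob_space_measure_pmf prob_unif)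
  interpret PS: prob_space "measure_pmf (bernoulli_pmf q) \<Otimes>\<^sub>M unif"
    by (intro prob_space_pair prob_space_measure_pmf prob_unif)
  have Gb: "\<bar>G a\<bar> \<le> \<bar>G True\<bar> + \<bar>G False\<bar>" for a by (cases a) auto
  have int: "integrable (measure_pmf (bernoulli_pmf q) \<Otimes>\<^sub>M unif) (\<lambda>y. G (fst y) * \<phi> (snd y))"
  proof (rule PS.integrable_const_bound[where B="\<bar>G True\<bar> + \<bar>G False\<bar>"])
    show "AE x in measure_pmf (bernoulli_pmf q) \<Otimes>\<^sub>M unif. norm (G (fst x) * \<phi> (snd x)) \<le> \<bar>G True\<bar> + \<bar>G False\<bar>"
    proof (intro AE_I2)
      fix x :: "bool \<times> real"
      have "\<bar>G (fst x)\<bar> * \<bar>\<phi> (snd x)\<bar> \<le> (\<bar>G True\<bar> + \<bar>G False\<bar>) * 1"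
        by (intro mult_mono Gb bnd) auto
      then show "norm (G (fst x) * \<phi> (snd x)) \<le> \<bar>G True\<bar> + \<bar>G False\<bar>" by (simp add: abs_mult)
    qed
    show "(\<lambda>y. G (fst y) * \<phi> (snd y)) \<in> borel_measurable (measure_pmf (bernoulli_pmf q) \<Otimes>\<^sub>M unif)"
      by measurable
  qed
  have "(\<integral>y. G (fst y) * \<phi> (snd y) \<partial>(measure_pmf (bernoulli_pmf q) \<Otimes>\<^sub>M unif))
      = (\<integral>x. (\<integral>\<theta>. G x * \<phi> \<theta> \<partial>unif) \<partial>measure_pmf (bernoulli_pmf q))"
    using P.integral_fst'[OF int] by simp
  also have "\<dots> = 0" using z by simp
  finally show ?thesis .
qed

lemma KL:
  fixes F :: "('n::finite \<Rightarrow> bool \<times> real) \<Rightarrow> real" and \<phi> :: "real \<Rightarrow> real"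
  assumes Fm: "F \<in> borel_measurable (chan_space pB)" and Fb: "\<And>w. \<bar>F w\<bar> \<le> B"
    and inv: "\<And>w t. F (w(j := (fst (w j), t))) = F w"
    and [measurable]: "\<phi> \<in> borel_measurable borel" and bnd: "\<And>t. \<bar>\<phi> t\<bar> \<le> 1"
    and z: "(\<integral>\<theta>. \<phi> \<theta> \<partial>unif) = 0"
  shows "(\<integral>w. F w * \<phi> (snd (w j)) \<partial>(chan_space pB :: ('n \<Rightarrow> bool \<times> real) measure)) = 0"
proof -
  define M where "M = measure_pmf (bernoulli_pmf (1-pB)) \<Otimes>\<^sub>M unif"
  have pM: "prob_space M" unfolding M_def
    by (intro prob_space_pair prob_space_measure_pmf prob_unif)
  interpret PP: product_prob_space "\<lambda>_. M"
    by (simp add: product_prob_space_def product_sigma_finite_def product_prob_space_axioms_def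
        prob_space_imp_sigma_finite pM)
  interpret PS: prob_space "PiM (insert j (UNIV - {j})) (\<lambda>_. M)"
    by (rule prob_space_PiM) (simp add: pM)
  have cs: "chan_space pB = PiM (insert j (UNIV - {j})) (\<lambda>_. M)"
    by (simp add: chan_space_def M_def insert_absorb)
  have Fm'[measurable]: "F \<in> borel_measurable (PiM (insert j (UNIV - {j})) (\<lambda>_. M))"
    using Fm cs by simp
  have Bn: "0 \<le> B" using Fb[of undefined] by simp
  have int: "integrable (PiM (insert j (UNIV - {j})) (\<lambda>_. M)) (\<lambda>w. F w * \<phi> (snd (w j)))"
  proof (rule PS.integrable_const_bound[where B=B])
    show "AE x in PiM (insert j (UNIV - {j})) (\<lambda>_. M). norm (F x * \<phi> (snd (x j))) \<le> B"
    proof (intro AE_I2)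
      fix x :: "'n \<Rightarrow> bool \<times> real"
      have "\<bar>F x\<bar> * \<bar>\<phi> (snd (x j))\<bar> \<le> B * 1"
        by (intro mult_mono Fb bnd Bn) auto
      then show "norm (F x * \<phi> (snd (x j))) \<le> B" by (simp add: abs_mult)
    qed
    have s: "(\<lambda>w. snd (w j)) \<in> borel_measurable (PiM (insert j (UNIV-{j})) (\<lambda>_. M))"
      unfolding M_def by measurable
    show "(\<lambda>w. F w * \<phi> (snd (w j))) \<in> borel_measurable (PiM (insert j (UNIV - {j})) (\<lambda>_. M))"
      by (intro borel_measurable_times Fm' measurable_compose[OF s]) simp
  qed
  have "(\<integral>w. F w * \<phi> (snd (w j)) \<partial>(chan_space pB :: ('n \<Rightarrow> bool \<times> real) measure))
     = (\<integral>x. (\<integral>y. F (x(j:=y)) * \<phi> (snd y) \<partial>M) \<partial>PiM (UNIV - {j}) (\<lambda>_. M))"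
    unfolding cs using PP.product_integral_insert[OF _ _ int] by simp
  also have "\<dots> = 0"
  proof -
    have inner: "(\<integral>y. F (x(j:=y)) * \<phi> (snd y) \<partial>M) = 0" for x :: "'n \<Rightarrow> bool \<times> real"
    proof -
      have e: "F (x(j:=y)) = F (x(j:=(fst y, 0)))" for y
        using inv[of "x(j:=y)" 0] by simp
      define G where "G a = F (x(j:=(a, 0)))" for a
      have e2: "(\<lambda>y. F (x(j:=y)) * \<phi> (snd y)) = (\<lambda>y. G (fst y) * \<phi> (snd y))"
      proof
        fix y :: "bool \<times> real"
        show "F (x(j:=y)) * \<phi> (snd y) = G (fst y) * \<phi> (snd y)"
          unfolding G_def using e[of y] by simp
      qed
      show ?thesis
        unfolding e2 M_def by (rule pair_zero[OF _ bnd z]) simp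
    qed
    show ?thesis by (simp add: inner)
  qed
  finally show ?thesis by simp
qed



lemma prob_chan: "prob_space (chan_space pB :: ('n::finite \<Rightarrow> bool \<times> real) measure)"
  unfolding chan_space_def by (intro prob_space_PiM prob_space_pair prob_space_measure_pmf prob_unif)

lemma meas_beta[measurable]: "(\<lambda>w. beta w l) \<in> borel_measurable (chan_space pB :: ('n::finite \<Rightarrow> bool \<times> real) measure)"
  unfolding chan_space_def beta_def by measurable

lemma meas_theta[measurable]: "(\<lambda>w. snd (w l)) \<in> borel_measurable (chan_space pB :: ('n::finite \<Rightarrow> bool \<times> real) measure)"
  unfolding chan_space_def by measurable

lemma meas_cis[measurable]: "cis \<in> borel_measurable borel"
  by (intro borel_measurable_continuous_onI continuous_intros)

lemma meas_chan[measurable]: "(\<lambda>w. chan w $ l) \<in> borel_measurable (chan_space pB :: ('n::finite \<Rightarrow> bool \<times> real) measure)"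
  unfolding chan_def by simp

lemma meas_num[measurable]: "num_unblocked \<in> borel_measurable (chan_space pB :: ('n::finite \<Rightarrow> bool \<times> real) measure)"
  unfolding num_unblocked_def by measurable

lemma int_bnd:
  fixes f :: "('n::finite \<Rightarrow> bool \<times> real) \<Rightarrow> real"
  assumes "f \<in> borel_measurable (chan_space pB)" "\<And>w. \<bar>f w\<bar> \<le> B"
  shows "integrable (chan_space pB) f"
proof -
  interpret prob_space "chan_space pB :: ('n \<Rightarrow> bool \<times> real) measure" by (rule prob_chan)
  show ?thesis
    by (rule integrable_const_bound[where B=B]) (use assms in auto)
qed

lemma beta01: "beta w l = 0 \<or> beta w l = 1"
  by (simp add: beta_def)

lemma beta_sq: "beta w l * beta w l = beta w l"
  by (simp add: beta_def)

lemma num_nonneg: "0 \<le> num_unblocked w"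
  unfolding num_unblocked_def by (intro sum_nonneg) (simp add: beta_def)

lemma chan_nth: "chan w $ l = complex_of_real (beta w l) * cis (snd (w l))"
  by (simp add: chan_def)

lemma chan_norm: "cmod (chan w $ l) \<le> 1"
  by (simp add: chan_nth norm_mult beta_def)

lemma cnj_chan_mult: "cnj (chan w $ l) * chan w $ l = complex_of_real (beta w l)"
proof -
  have "cnj (cis t) * cis t = 1" for t by (simp add: cis_cnj cis_mult)
  then show ?thesis by (simp add: chan_nth beta_def)
qed

lemma upd_beta: "beta (w(j := (fst (w j), t))) l = beta w l"
  by (simp add: beta_def)

lemma upd_num: "num_unblocked (w(j := (fst (w j), t))) = num_unblocked w"
  by (simp add: num_unblocked_def upd_beta)

lemma upd_chan: "i \<noteq> j \<Longrightarrow> chan (w(j := (fst (w j), t))) $ i = chan w $ i"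
  by (simp add: chan_nth upd_beta)

lemma Toff:
  fixes Q :: "complex^'n::finite^'n" assumes ij: "i \<noteq> j" and P: "0 \<le> P"
  shows "(\<integral>w. Re (cnj (chan w $ i) * Q$i$j * chan w $ j) / (1 + num_unblocked w * P)
           \<partial>(chan_space pB :: ('n \<Rightarrow> bool \<times> real) measure)) = 0"
proof -
  define c where "c w = cnj (chan w $ i) * Q$i$j" for w :: "'n \<Rightarrow> bool \<times> real"
  define F1 where "F1 w = beta w j * Re (c w) / (1 + num_unblocked w * P)" for w
  define F2 where "F2 w = - (beta w j * Im (c w)) / (1 + num_unblocked w * P)" for w
  have pos: "1 \<le> 1 + num_unblocked w * P" for w using num_nonneg[of w] P by simp
  have dec: "Re (cnj (chan w $ i) * Q$i$j * chan w $ j) / (1 + num_unblocked w * P)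
      = F1 w * cos (snd (w j)) + F2 w * sin (snd (w j))" for w
  proof -
    have "Re (cnj (chan w $ i) * Q$i$j * chan w $ j) = beta w j * Re (c w) * cos (snd (w j)) - beta w j * Im (c w) * sin (snd (w j))"
      unfolding c_def[symmetric] chan_nth[of w j] by (simp add: algebra_simps)
    then have "Re (cnj (chan w $ i) * Q$i$j * chan w $ j) / (1 + num_unblocked w * P)
      = (beta w j * Re (c w) * cos (snd (w j))) / (1 + num_unblocked w * P) - (beta w j * Im (c w) * sin (snd (w j))) / (1 + num_unblocked w * P)"
      by (simp only: diff_divide_distrib)
    also have "\<dots> = F1 w * cos (snd (w j)) + F2 w * sin (snd (w j))"
      unfolding F1_def F2_def by simp
    finally show ?thesis .
  qed
  have cb: "cmod (c w) \<le> cmod (Q$i$j)" for w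
  proof -
    have "cmod (c w) = cmod (chan w $ i) * cmod (Q$i$j)" by (simp add: c_def norm_mult)
    also have "\<dots> \<le> 1 * cmod (Q$i$j)" by (intro mult_right_mono chan_norm) auto
    finally show ?thesis by simp
  qed
  have gb: "\<bar>beta w j * r / (1 + num_unblocked w * P)\<bar> \<le> \<bar>r\<bar>" for w r
  proof -
    have "\<bar>beta w j * r\<bar> \<le> \<bar>r\<bar>" using beta01[of w j] by auto
    also have "\<dots> \<le> \<bar>r\<bar> * (1 + num_unblocked w * P)" using pos[of w]
      by (metis mult_le_cancel_left1 abs_ge_zero order.trans linorder_not_le mult.commute mult_left_le_one_le)
    finally show ?thesis using pos[of w] by (simp add: abs_div pos_divide_le_eq)
  qed
  have F1b: "\<bar>F1 w\<bar> \<le> cmod (Q$i$j)" for w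
    using gb[of w "Re (c w)"] abs_Re_le_cmod[of "c w"] cb[of w] unfolding F1_def by linarith
  have F2b: "\<bar>F2 w\<bar> \<le> cmod (Q$i$j)" for w
    using gb[of w "Im (c w)"] abs_Im_le_cmod[of "c w"] cb[of w] unfolding F2_def by (simp add: abs_minus_cancel)
  have cm[measurable]: "c \<in> borel_measurable (chan_space pB :: ('n \<Rightarrow> bool \<times> real) measure)"
  proof -
    have m1: "(\<lambda>w. cnj (chan w $ i)) \<in> borel_measurable (chan_space pB :: ('n \<Rightarrow> bool \<times> real) measure)"
      by (rule measurable_compose[OF meas_chan borel_measurable_continuous_onI]) (intro continuous_intros)
    show ?thesis unfolding c_def[abs_def] by (rule borel_measurable_times[OF m1 borel_measurable_const])
  qed
  have F1m: "F1 \<in> borel_measurable (chan_space pB :: ('n \<Rightarrow> bool \<times> real) measure)"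
    unfolding F1_def[abs_def] by measurable
  have F2m: "F2 \<in> borel_measurable (chan_space pB :: ('n \<Rightarrow> bool \<times> real) measure)"
    unfolding F2_def[abs_def] minus_divide_left[symmetric] by measurable
  have F1i: "F1 (w(j := (fst (w j), t))) = F1 w" for w t
    by (simp add: F1_def c_def upd_beta upd_num upd_chan[OF ij])
  have F2i: "F2 (w(j := (fst (w j), t))) = F2 w" for w t
    by (simp add: F2_def c_def upd_beta upd_num upd_chan[OF ij])
  have bc1: "\<bar>cos t\<bar> \<le> 1" for t :: real by (rule abs_cos_le_one)
  have bc2: "\<bar>sin t\<bar> \<le> 1" for t :: real by (rule abs_sin_le_one)
  have K1: "(\<integral>w. F1 w * cos (snd (w j)) \<partial>(chan_space pB :: ('n \<Rightarrow> bool \<times> real) measure)) = 0"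
    by (rule KL[OF F1m F1b F1i _ bc1 unif_cos]) simp
  have K2: "(\<integral>w. F2 w * sin (snd (w j)) \<partial>(chan_space pB :: ('n \<Rightarrow> bool \<times> real) measure)) = 0"
    by (rule KL[OF F2m F2b F2i _ bc2 unif_sin]) simp
  have pb: "\<bar>F w * g t\<bar> \<le> cmod (Q$i$j)" if "\<bar>F w\<bar> \<le> cmod (Q$i$j)" "\<bar>g t\<bar> \<le> 1" for F :: "('n \<Rightarrow> bool \<times> real) \<Rightarrow> real" and g :: "real \<Rightarrow> real" and w t
  proof -
    have "\<bar>F w\<bar> * \<bar>g t\<bar> \<le> cmod (Q$i$j) * 1" by (intro mult_mono that) auto
    then show ?thesis by (simp add: abs_mult)
  qed
  have I1: "integrable (chan_space pB :: ('n \<Rightarrow> bool \<times> real) measure) (\<lambda>w. F1 w * cos (snd (w j)))"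
    by (rule int_bnd[where B="cmod (Q$i$j)"]) (use F1m in measurable, intro pb F1b bc1)
  have I2: "integrable (chan_space pB :: ('n \<Rightarrow> bool \<times> real) measure) (\<lambda>w. F2 w * sin (snd (w j)))"
    by (rule int_bnd[where B="cmod (Q$i$j)"]) (use F2m in measurable, intro pb F2b bc2)
  show ?thesis unfolding dec using K1 K2 I1 I2 by simp
qed



lemma meas_cnj_raw[measurable (raw)]:
  "f \<in> borel_measurable M \<Longrightarrow> (\<lambda>x. cnj (f x :: complex)) \<in> borel_measurable M"
  by (rule measurable_compose[OF _ borel_measurable_continuous_onI]) (auto intro: continuous_intros)

lemma upper:
  fixes Q :: "complex^'n::finite^'n"
  assumes psd: "herm_psd Q" and diag: "\<forall>l. Re (Q$l$l) \<le> P" and P: "0 \<le> P" and b: "1 < b"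
  shows "(\<integral>w. log b (1 + Re (herm_form Q (chan w))) \<partial>(chan_space pB :: ('n \<Rightarrow> bool \<times> real) measure))
       \<le> (\<integral>w. log b (1 + num_unblocked w * P) \<partial>(chan_space pB :: ('n \<Rightarrow> bool \<times> real) measure))"
proof -
  let ?M = "chan_space pB :: ('n \<Rightarrow> bool \<times> real) measure"
  define X where "X w = Re (herm_form Q (chan w))" for w :: "'n \<Rightarrow> bool \<times> real"
  define Y where "Y w = num_unblocked w * P" for w :: "'n \<Rightarrow> bool \<times> real"
  define T where "T i j w = Re (cnj (chan w $ i) * Q$i$j * chan w $ j) / (1 + Y w)" for i j w
  define K where "K = (\<Sum>i\<in>UNIV. \<Sum>j\<in>UNIV. cmod (Q$i$j))"
  have X0: "0 \<le> X w" for w using psd by (simp add: herm_psd_def X_def)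
  have Y0: "0 \<le> Y w" for w using num_nonneg[of w] P by (simp add: Y_def)
  have Xm[measurable]: "X \<in> borel_measurable ?M" unfolding X_def[abs_def] herm_form_def by measurable
  have Ym[measurable]: "Y \<in> borel_measurable ?M" unfolding Y_def[abs_def] by measurable
  have Tm[measurable]: "T i j \<in> borel_measurable ?M" for i j unfolding T_def[abs_def] by measurable
  have pos: "1 \<le> 1 + Y w" for w using Y0[of w] by simp
  have Tb: "\<bar>T i j w\<bar> \<le> cmod (Q$i$j)" for i j w
  proof -
    have "\<bar>Re (cnj (chan w $ i) * Q$i$j * chan w $ j)\<bar> \<le> cmod (cnj (chan w $ i) * Q$i$j * chan w $ j)"
      by (rule abs_Re_le_cmod)
    also have "\<dots> = cmod (chan w $ i) * cmod (Q$i$j) * cmod (chan w $ j)" by (simp add: norm_mult)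
    also have "\<dots> \<le> 1 * cmod (Q$i$j) * 1"
      by (intro mult_mono chan_norm) auto
    finally have a: "\<bar>Re (cnj (chan w $ i) * Q$i$j * chan w $ j)\<bar> \<le> cmod (Q$i$j)" by simp
    have "\<bar>T i j w\<bar> = \<bar>Re (cnj (chan w $ i) * Q$i$j * chan w $ j)\<bar> / (1 + Y w)"
      using pos[of w] by (simp add: T_def abs_div)
    also have "\<dots> \<le> \<bar>Re (cnj (chan w $ i) * Q$i$j * chan w $ j)\<bar>"
      using pos[of w] by (simp add: divide_le_eq_1 divide_le_eq mult_le_cancel_left1 order_trans[OF _ mult_right_mono] )
    finally show ?thesis using a by linarith
  qed
  have Tint: "integrable ?M (T i j)" for i j
    by (rule int_bnd[OF Tm Tb])
  have Toff': "i \<noteq> j \<Longrightarrow> integral\<^sup>L ?M (T i j) = 0" for i j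
    unfolding T_def Y_def by (rule Toff[OF _ P])
  have Tdiag: "T i i w \<le> beta w i * P / (1 + Y w)" for i w
  proof -
    have "cnj (chan w $ i) * Q$i$i * chan w $ i = Q$i$i * (cnj (chan w $ i) * chan w $ i)"
      by (simp add: algebra_simps)
    also have "\<dots> = Q$i$i * complex_of_real (beta w i)" by (simp add: cnj_chan_mult)
    finally have e: "cnj (chan w $ i) * Q$i$i * chan w $ i = Q$i$i * complex_of_real (beta w i)" .
    have "Re (Q$i$i * complex_of_real (beta w i)) = beta w i * Re (Q$i$i)" by simp
    then have "Re (cnj (chan w $ i) * Q$i$i * chan w $ i) = beta w i * Re (Q$i$i)" unfolding e .
    also have "\<dots> \<le> beta w i * P" using diag beta01[of w i] by auto
    finally show ?thesis unfolding T_def using pos[of w] by (intro divide_right_mono) auto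
  qed
  have Dm[measurable]: "(\<lambda>w. beta w i * P / (1 + Y w)) \<in> borel_measurable ?M" for i by measurable
  have Db: "\<bar>beta w i * P / (1 + Y w)\<bar> \<le> P" for i w
  proof -
    have a: "0 \<le> beta w i * P" "beta w i * P \<le> P" using beta01[of w i] P by auto
    have "beta w i * P / (1 + Y w) \<le> beta w i * P / 1"
      using a pos[of w] by (intro frac_le) auto
    moreover have "0 \<le> beta w i * P / (1 + Y w)" using a pos[of w] by simp
    ultimately show ?thesis using a by (simp only: abs_of_nonneg)
  qed
  have Dint: "integrable ?M (\<lambda>w. beta w i * P / (1 + Y w))" for i
    by (rule int_bnd[OF Dm Db])
  have Xsum: "X w / (1 + Y w) = (\<Sum>i\<in>UNIV. \<Sum>j\<in>UNIV. T i j w)" for w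
    by (simp add: X_def T_def herm_form_def Re_sum sum_divide_distrib)
  have Ysum: "Y w / (1 + Y w) = (\<Sum>i\<in>UNIV. beta w i * P / (1 + Y w))" for w
  proof -
    have "Y w = (\<Sum>i\<in>UNIV. beta w i * P)" by (simp add: Y_def num_unblocked_def sum_distrib_right)
    then have "Y w / (1 + Y w) = (\<Sum>i\<in>UNIV. beta w i * P) / (1 + Y w)" by simp
    then show ?thesis by (simp add: sum_divide_distrib)
  qed
  have hXY: "(\<integral>w. X w / (1 + Y w) \<partial>?M) \<le> (\<integral>w. Y w / (1 + Y w) \<partial>?M)"
  proof -
    have "(\<integral>w. X w / (1 + Y w) \<partial>?M) = (\<integral>w. (\<Sum>i\<in>UNIV. \<Sum>j\<in>UNIV. T i j w) \<partial>?M)"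
      by (simp add: Xsum)
    also have "\<dots> = (\<Sum>i\<in>UNIV. (\<integral>w. (\<Sum>j\<in>UNIV. T i j w) \<partial>?M))"
      by (rule Bochner_Integration.integral_sum[where f="\<lambda>i w. \<Sum>j\<in>UNIV. T i j w"]) (rule Bochner_Integration.integrable_sum, rule Tint)
    also have "\<dots> = (\<Sum>i\<in>UNIV. \<Sum>j\<in>UNIV. (\<integral>w. T i j w \<partial>?M))"
      by (intro sum.cong refl Bochner_Integration.integral_sum[where f="\<lambda>j w. T _ j w"] Tint)
    also have "\<dots> = (\<Sum>i\<in>UNIV. (\<integral>w. T i i w \<partial>?M))"
    proof (intro sum.cong refl)
      fix i
      have "(\<Sum>j\<in>UNIV. (\<integral>w. T i j w \<partial>?M)) = (\<Sum>j\<in>UNIV. if j = i then (\<integral>w. T i i w \<partial>?M) else 0)"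
        using Toff' by (intro sum.cong refl) auto
      also have "\<dots> = (\<integral>w. T i i w \<partial>?M)" by simp
      finally show "(\<Sum>j\<in>UNIV. (\<integral>w. T i j w \<partial>?M)) = (\<integral>w. T i i w \<partial>?M)" .
    qed
    also have "\<dots> \<le> (\<Sum>i\<in>UNIV. (\<integral>w. beta w i * P / (1 + Y w) \<partial>?M))"
      by (intro sum_mono integral_mono Tint Dint Tdiag)
    also have "\<dots> = (\<integral>w. (\<Sum>i\<in>UNIV. beta w i * P / (1 + Y w)) \<partial>?M)"
      by (rule Bochner_Integration.integral_sum[where f="\<lambda>i w. beta w i * P / (1 + Y w)", symmetric]) (rule Dint)
    also have "\<dots> = (\<integral>w. Y w / (1 + Y w) \<partial>?M)"
      by (simp add: Ysum)
    finally show ?thesis .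
  qed
  have lnb: "0 < ln b" using b by simp
  have pw: "log b (1 + X w) \<le> log b (1 + Y w) + (X w / (1 + Y w) - Y w / (1 + Y w)) / ln b" for w
  proof -
    have "ln (1 + X w) - ln (1 + Y w) = ln ((1 + X w) / (1 + Y w))"
      using X0[of w] Y0[of w] by (simp add: ln_div)
    also have "\<dots> \<le> (1 + X w) / (1 + Y w) - 1"
      by (rule ln_le_minus_one) (use X0[of w] Y0[of w] in simp)
    also have "\<dots> = X w / (1 + Y w) - Y w / (1 + Y w)"
    proof -
      have d: "1 + Y w \<noteq> 0" using pos[of w] by linarith
      have e1: "(1 + X w) / (1 + Y w) = 1 / (1 + Y w) + X w / (1 + Y w)" by (rule add_divide_distrib)
      have e2: "1 = 1 / (1 + Y w) + Y w / (1 + Y w)"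
        using d by (simp add: add_divide_distrib[symmetric])
      show ?thesis using e1 e2 by linarith
    qed
    finally have "ln (1 + X w) \<le> ln (1 + Y w) + (X w / (1 + Y w) - Y w / (1 + Y w))" by simp
    then have "ln (1 + X w) / ln b \<le> (ln (1 + Y w) + (X w / (1 + Y w) - Y w / (1 + Y w))) / ln b"
      using lnb by (intro divide_right_mono) auto
    then show ?thesis by (simp add: log_def add_divide_distrib)
  qed
  have termb: "cmod (cnj (chan w $ i) * Q$i$j * chan w $ j) \<le> cmod (Q$i$j)" for w i j
  proof -
    have "cmod (cnj (chan w $ i) * Q$i$j * chan w $ j) = cmod (chan w $ i) * cmod (Q$i$j) * cmod (chan w $ j)"
      by (simp add: norm_mult)
    also have "\<dots> \<le> 1 * cmod (Q$i$j) * 1"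
      by (intro mult_mono chan_norm) auto
    finally show ?thesis by simp
  qed
  have Xb: "X w \<le> K" for w
  proof -
    have "X w \<le> cmod (herm_form Q (chan w))" unfolding X_def by (rule complex_Re_le_cmod)
    also have "\<dots> \<le> (\<Sum>i\<in>UNIV. cmod (\<Sum>j\<in>UNIV. cnj (chan w $ i) * Q$i$j * chan w $ j))"
      unfolding herm_form_def by (rule norm_sum)
    also have "\<dots> \<le> (\<Sum>i\<in>UNIV. \<Sum>j\<in>UNIV. cmod (cnj (chan w $ i) * Q$i$j * chan w $ j))"
      by (intro sum_mono norm_sum)
    also have "\<dots> \<le> K" unfolding K_def by (intro sum_mono termb)
    finally show ?thesis .
  qed
  have Yb: "Y w \<le> real CARD('n) * P" for w
  proof -
    have "num_unblocked w \<le> real (card (UNIV :: 'n set)) * 1"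
      unfolding num_unblocked_def by (rule sum_bounded_above) (simp add: beta_def)
    then show ?thesis unfolding Y_def using P by (simp add: mult_right_mono)
  qed
  have LXint: "integrable ?M (\<lambda>w. log b (1 + X w))"
  proof (rule int_bnd[where B="log b (1 + K)"])
    show "(\<lambda>w. log b (1 + X w)) \<in> borel_measurable ?M" by measurable
    fix w
    have "0 \<le> log b (1 + X w)" using X0[of w] b by simp
    moreover have "log b (1 + X w) \<le> log b (1 + K)" using X0[of w] Xb[of w] b by simp
    ultimately show "\<bar>log b (1 + X w)\<bar> \<le> log b (1 + K)" by simp
  qed
  have LYint: "integrable ?M (\<lambda>w. log b (1 + Y w))"
  proof (rule int_bnd[where B="log b (1 + real CARD('n) * P)"])
    show "(\<lambda>w. log b (1 + Y w)) \<in> borel_measurable ?M" by measurable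
    fix w
    have "0 \<le> log b (1 + Y w)" using Y0[of w] b by simp
    moreover have "log b (1 + Y w) \<le> log b (1 + real CARD('n) * P)" using Y0[of w] Yb[of w] b by simp
    ultimately show "\<bar>log b (1 + Y w)\<bar> \<le> log b (1 + real CARD('n) * P)" by simp
  qed
  have XYint: "integrable ?M (\<lambda>w. X w / (1 + Y w))"
  proof (rule int_bnd[where B="K"])
    show "(\<lambda>w. X w / (1 + Y w)) \<in> borel_measurable ?M" by measurable
    fix w
    have "X w / (1 + Y w) \<le> X w / 1" using X0[of w] pos[of w] by (intro frac_le) auto
    moreover have "0 \<le> X w / (1 + Y w)" using X0[of w] pos[of w] by simp
    ultimately show "\<bar>X w / (1 + Y w)\<bar> \<le> K" using Xb[of w] by linarith
  qed
  have YYint: "integrable ?M (\<lambda>w. Y w / (1 + Y w))"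
  proof (rule int_bnd[where B="1"])
    show "(\<lambda>w. Y w / (1 + Y w)) \<in> borel_measurable ?M" by measurable
    fix w
    have "Y w / (1 + Y w) \<le> 1" using pos[of w] by simp
    moreover have "0 \<le> Y w / (1 + Y w)" using Y0[of w] pos[of w] by simp
    ultimately show "\<bar>Y w / (1 + Y w)\<bar> \<le> 1" by linarith
  qed
  have Rint: "integrable ?M (\<lambda>w. log b (1 + Y w) + (X w / (1 + Y w) - Y w / (1 + Y w)) / ln b)"
    by (intro Bochner_Integration.integrable_add integrable_divide Bochner_Integration.integrable_diff LYint XYint YYint)
  have "(\<integral>w. log b (1 + X w) \<partial>?M) \<le> (\<integral>w. log b (1 + Y w) + (X w / (1 + Y w) - Y w / (1 + Y w)) / ln b \<partial>?M)"
    by (rule integral_mono[OF LXint Rint pw])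
  also have "\<dots> = (\<integral>w. log b (1 + Y w) \<partial>?M) + ((\<integral>w. X w / (1 + Y w) \<partial>?M) - (\<integral>w. Y w / (1 + Y w) \<partial>?M)) / ln b"
    using LYint XYint YYint
    by (simp add: Bochner_Integration.integral_add Bochner_Integration.integral_diff integrable_divide
        Bochner_Integration.integrable_diff integral_divide_zero)
  also have "\<dots> \<le> (\<integral>w. log b (1 + Y w) \<partial>?M)"
    using hXY lnb by (simp add: divide_nonpos_pos)
  finally show ?thesis unfolding X_def Y_def .
qed

lemma herm_form_diag:
  "herm_form (\<chi> i j. if i = j then complex_of_real P else 0) x = (\<Sum>i\<in>UNIV. cnj (x $ i) * complex_of_real P * x $ i)"
proof -
  have "herm_form (\<chi> i j. if i = j then complex_of_real P else 0) x
      = (\<Sum>i\<in>UNIV. \<Sum>j\<in>UNIV. if i = j then cnj (x $ i) * complex_of_real P * x $ j else 0)"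
    unfolding herm_form_def by (intro sum.cong refl) auto
  also have "\<dots> = (\<Sum>i\<in>UNIV. cnj (x $ i) * complex_of_real P * x $ i)"
    by simp
  finally show ?thesis .
qed

lemma Q0_props:
  assumes P: "0 \<le> P"
  shows "herm_psd (\<chi> i j. if i = j then complex_of_real P else 0 :: complex^'n::finite^'n)"
    and "\<forall>l. Re ((\<chi> i j. if i = j then complex_of_real P else 0 :: complex^'n::finite^'n) $ l $ l) \<le> P"
    and "Re (herm_form (\<chi> i j. if i = j then complex_of_real P else 0 :: complex^'n::finite^'n) (chan w))
         = num_unblocked w * P"
proof -
  have h: "Re (cnj z * complex_of_real P * z) = P * (Re z * Re z + Im z * Im z)" for z
    by (simp add: algebra_simps)
  show "herm_psd (\<chi> i j. if i = j then complex_of_real P else 0 :: complex^'n::finite^'n)"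
    unfolding herm_psd_def hermitian_def
  proof (intro conjI allI)
    fix i j :: 'n
    show "(\<chi> i j. if i = j then complex_of_real P else 0 :: complex^'n::finite^'n) $ i $ j
        = cnj ((\<chi> i j. if i = j then complex_of_real P else 0 :: complex^'n::finite^'n) $ j $ i)"
      by simp
  next
    fix x :: "complex^'n"
    show "0 \<le> Re (herm_form (\<chi> i j. if i = j then complex_of_real P else 0 :: complex^'n::finite^'n) x)"
      unfolding herm_form_diag Re_sum h using P by (intro sum_nonneg mult_nonneg_nonneg) auto
  qed
  show "\<forall>l. Re ((\<chi> i j. if i = j then complex_of_real P else 0 :: complex^'n::finite^'n) $ l $ l) \<le> P"
    by simp
  have t0: "cnj (chan w $ i) * complex_of_real P * chan w $ i = complex_of_real (beta w i * P)" for i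
  proof -
    have "cnj (chan w $ i) * complex_of_real P * chan w $ i = complex_of_real P * (cnj (chan w $ i) * chan w $ i)"
      by (simp add: algebra_simps)
    then show ?thesis by (simp add: cnj_chan_mult)
  qed
  have t: "Re (cnj (chan w $ i) * complex_of_real P * chan w $ i) = beta w i * P" for i
    by (simp only: t0 Re_complex_of_real)
  show "Re (herm_form (\<chi> i j. if i = j then complex_of_real P else 0 :: complex^'n::finite^'n) (chan w))
         = num_unblocked w * P"
    unfolding herm_form_diag Re_sum t by (simp add: num_unblocked_def sum_distrib_right)
qed

theorem corollary1:
  fixes P pB b :: real
  assumes "0 \<le> P" and "0 \<le> pB" and "pB \<le> 1" and "1 < b"
  shows "(SUP Q\<in>{Q :: complex^'n::finite^'n. herm_psd Q \<and> (\<forall>l. Re (Q $ l $ l) \<le> P)}.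
            \<integral>\<omega>. log b (1 + Re (herm_form Q (chan \<omega>))) \<partial>(chan_space pB :: ('n \<Rightarrow> bool \<times> real) measure))
         = (\<integral>\<omega>. log b (1 + num_unblocked \<omega> * P) \<partial>(chan_space pB :: ('n \<Rightarrow> bool \<times> real) measure))"
proof (rule cSup_eq_maximum)
  let ?Q0 = "\<chi> i j. if i = j then complex_of_real P else 0 :: complex^'n::finite^'n"
  have e1: "(\<integral>\<omega>. log b (1 + Re (herm_form ?Q0 (chan \<omega>))) \<partial>(chan_space pB :: ('n \<Rightarrow> bool \<times> real) measure))
      = (\<integral>\<omega>. log b (1 + num_unblocked \<omega> * P) \<partial>(chan_space pB :: ('n \<Rightarrow> bool \<times> real) measure))"
    by (simp only: Q0_props(3)[OF assms(1)])
  have e2: "?Q0 \<in> {Q :: complex^'n::finite^'n. herm_psd Q \<and> (\<forall>l. Re (Q $ l $ l) \<le> P)}"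
    using Q0_props(1,2)[OF assms(1)] by blast
  show "(\<integral>\<omega>. log b (1 + num_unblocked \<omega> * P) \<partial>(chan_space pB :: ('n \<Rightarrow> bool \<times> real) measure))
    \<in> (\<lambda>Q. \<integral>\<omega>. log b (1 + Re (herm_form Q (chan \<omega>))) \<partial>(chan_space pB :: ('n \<Rightarrow> bool \<times> real) measure))
      ` {Q :: complex^'n::finite^'n. herm_psd Q \<and> (\<forall>l. Re (Q $ l $ l) \<le> P)}"
    by (rule image_eqI[where x="?Q0"]) (rule e1[symmetric], rule e2)
next
  fix x assume "x \<in> (\<lambda>Q. \<integral>\<omega>. log b (1 + Re (herm_form Q (chan \<omega>))) \<partial>(chan_space pB :: ('n \<Rightarrow> bool \<times> real) measure))
      ` {Q :: complex^'n::finite^'n. herm_psd Q \<and> (\<forall>l. Re (Q $ l $ l) \<le> P)}"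
  then obtain Q where Q: "herm_psd Q" "\<forall>l. Re (Q $ l $ l) \<le> P"
    and x: "x = (\<integral>\<omega>. log b (1 + Re (herm_form Q (chan \<omega>))) \<partial>(chan_space pB :: ('n \<Rightarrow> bool \<times> real) measure))"
    by blast
  show "x \<le> (\<integral>\<omega>. log b (1 + num_unblocked \<omega> * P) \<partial>(chan_space pB :: ('n \<Rightarrow> bool \<times> real) measure))"
    unfolding x by (rule upper[OF Q assms(1) assms(4)])
qed

end
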